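(* Let $\mathbf{L}$ be a distributive lattice, $n\ge1$ an integer, $F$ an $n$-filter on $\mathbf{L}$ and $x,y\in\mathbf{L}$. Then \[ \langle F,x\rangle_n\cap\langle F,y\rangle_n=\langle F,x\vee y\rangle_n, \] where $\langle F,z\rangle_n$ denotes the $n$-filter generated by $F\cup\{z\}$.
   Context: For a set $X$, $Y\subseteq_n X$ means $Y$ is a non-empty subset of $X$ with $|Y|\le n$. An $n$-filter on a lattice is an upset $F$ such that for every non-empty finite $X\subseteq F$: if $\bigwedge Y\in F$ for every $Y\subseteq_n X$ then $\bigwedge X\in F$. The $n$-filter generated by a set is the smallest $n$-filter containing it. *)

theory Defs
  imports Main
begin

definition upset :: "'a::order set \<Rightarrow> bool" where
  "upset F \<longleftrightarrow> (\<forall>x y. x \<in> F \<longrightarrow> x \<le> y \<longrightarrow> y \<in> F)"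

definition n_filter :: "nat \<Rightarrow> 'a::lattice set \<Rightarrow> bool" where
  "n_filter n F \<longleftrightarrow> upset F \<and>
     (\<forall>X. finite X \<and> X \<noteq> {} \<and> X \<subseteq> F \<longrightarrow>
        (\<forall>Y. Y \<subseteq> X \<and> Y \<noteq> {} \<and> card Y \<le> n \<longrightarrow> Inf_fin Y \<in> F) \<longrightarrow> Inf_fin X \<in> F)"

definition n_filter_gen :: "nat \<Rightarrow> 'a::lattice set \<Rightarrow> 'a set" where
  "n_filter_gen n S = \<Inter>{G. n_filter n G \<and> S \<subseteq> G}"

end

theory Submission
  imports Defs
begin

lemma gen_least: "n_filter n G \<Longrightarrow> S \<subseteq> G \<Longrightarrow> n_filter_gen n S \<subseteq> G"
  unfolding n_filter_gen_def by blast

lemma gen_sub: "S \<subseteq> n_filter_gen n S"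
  unfolding n_filter_gen_def by blast

lemma gen_filter: "n_filter n (n_filter_gen n (S::'a::lattice set))"
proof -
  have up: "upset (n_filter_gen n S)"
    unfolding upset_def n_filter_gen_def n_filter_def upset_def by blast
  show ?thesis unfolding n_filter_def
  proof (intro conjI up allI impI)
    fix X :: "'a set"
    assume X: "finite X \<and> X \<noteq> {} \<and> X \<subseteq> n_filter_gen n S"
      and Y: "\<forall>Y. Y \<subseteq> X \<and> Y \<noteq> {} \<and> card Y \<le> n \<longrightarrow> Inf_fin Y \<in> n_filter_gen n S"
    show "Inf_fin X \<in> n_filter_gen n S"
      unfolding n_filter_gen_def
    proof
      fix G assume G: "G \<in> {G. n_filter n G \<and> S \<subseteq> G}"
      have "X \<subseteq> G" using X G unfolding n_filter_gen_def by blast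
      moreover have "\<forall>Y. Y \<subseteq> X \<and> Y \<noteq> {} \<and> card Y \<le> n \<longrightarrow> Inf_fin Y \<in> G"
        using Y G unfolding n_filter_gen_def by blast
      ultimately show "Inf_fin X \<in> G" using G X unfolding n_filter_def by blast
    qed
  qed
qed

lemma Inf_fin_sup:
  fixes c :: "'a::distrib_lattice"
  assumes "finite X" "X \<noteq> {}"
  shows "Inf_fin (sup c ` X) = sup c (Inf_fin X)"
  using assms
proof (induction X rule: finite_ne_induct)
  case (singleton a) then show ?case by simp
next
  case (insert a X)
  then show ?case by (simp add: sup_inf_distrib1)
qed

lemma shift_filter:
  fixes c :: "'a::distrib_lattice"
  assumes G: "n_filter n G"
  shows "n_filter n {b. sup c b \<in> G}"
  unfolding n_filter_def
proof (intro conjI allI impI)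
  have "upset G" using G unfolding n_filter_def by blast
  then show "upset {b. sup c b \<in> G}" unfolding upset_def
    by (metis mem_Collect_eq sup.mono order_refl)
next
  fix X :: "'a set"
  assume X: "finite X \<and> X \<noteq> {} \<and> X \<subseteq> {b. sup c b \<in> G}"
    and Y: "\<forall>Y. Y \<subseteq> X \<and> Y \<noteq> {} \<and> card Y \<le> n \<longrightarrow> Inf_fin Y \<in> {b. sup c b \<in> G}"
  have fX: "finite (sup c ` X)" "sup c ` X \<noteq> {}" "sup c ` X \<subseteq> G" using X by auto
  have "\<forall>Y'. Y' \<subseteq> sup c ` X \<and> Y' \<noteq> {} \<and> card Y' \<le> n \<longrightarrow> Inf_fin Y' \<in> G"
  proof (intro allI impI)
    fix Y' assume H: "Y' \<subseteq> sup c ` X \<and> Y' \<noteq> {} \<and> card Y' \<le> n"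
    then obtain U where U: "U \<subseteq> X" "inj_on (sup c) U" "Y' = sup c ` U"
      by (meson subset_image_inj)
    have "finite U" using U X finite_subset by blast
    moreover have "U \<noteq> {}" using U H by blast
    moreover have "card U \<le> n" using U H card_image by metis
    ultimately have "sup c (Inf_fin U) \<in> G" using Y U by blast
    then show "Inf_fin Y' \<in> G" using U Inf_fin_sup \<open>finite U\<close> \<open>U \<noteq> {}\<close> by metis
  qed
  then have "Inf_fin (sup c ` X) \<in> G" using G fX unfolding n_filter_def by blast
  then show "Inf_fin X \<in> {b. sup c b \<in> G}" using Inf_fin_sup[of X c] X by simp
qed

theorem mainTheorem9:
  fixes F :: "'a::distrib_lattice set" and n :: nat and x y :: 'a
  assumes "n \<ge> 1" and "n_filter n F"
  shows "n_filter_gen n (F \<union> {x}) \<inter> n_filter_gen n (F \<union> {y}) = n_filter_gen n (F \<union> {sup x y})"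
proof
  let ?G = "n_filter_gen n (F \<union> {sup x y})"
  have GF: "n_filter n ?G" by (rule gen_filter)
  have FG: "F \<union> {sup x y} \<subseteq> ?G" by (rule gen_sub)
  have upG: "upset ?G" using GF unfolding n_filter_def by blast
  have inG: "\<And>a b. a \<in> ?G \<Longrightarrow> a \<le> b \<Longrightarrow> b \<in> ?G" using upG unfolding upset_def by blast
  have 1: "n_filter_gen n (F \<union> {x}) \<subseteq> {a. sup y a \<in> ?G}"
  proof (rule gen_least[OF shift_filter[OF GF]])
    show "F \<union> {x} \<subseteq> {a. sup y a \<in> ?G}"
    proof
      fix z assume "z \<in> F \<union> {x}"
      then show "z \<in> {a. sup y a \<in> ?G}"
      proof
        assume "z \<in> F" then show ?thesis using FG inG[of z "sup y z"] by auto
      next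
        assume "z \<in> {x}" then show ?thesis using FG by (simp add: sup_commute)
      qed
    qed
  qed
  show "n_filter_gen n (F \<union> {x}) \<inter> n_filter_gen n (F \<union> {y}) \<subseteq> ?G"
  proof
    fix a assume a: "a \<in> n_filter_gen n (F \<union> {x}) \<inter> n_filter_gen n (F \<union> {y})"
    have ay: "sup y a \<in> ?G" using a 1 by blast
    have "n_filter_gen n (F \<union> {y}) \<subseteq> {b. sup a b \<in> ?G}"
    proof (rule gen_least[OF shift_filter[OF GF]])
      show "F \<union> {y} \<subseteq> {b. sup a b \<in> ?G}"
      proof
        fix z assume "z \<in> F \<union> {y}"
        then show "z \<in> {b. sup a b \<in> ?G}"
        proof
          assume "z \<in> F" then show ?thesis using FG inG[of z "sup a z"] by auto
        next
          assume "z \<in> {y}" then show ?thesis using ay by (simp add: sup_commute)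
        qed
      qed
    qed
    then show "a \<in> ?G" using a by auto
  qed
next
  let ?G = "n_filter_gen n (F \<union> {sup x y})"
  have "?G \<subseteq> n_filter_gen n (F \<union> {x})"
  proof (rule gen_least[OF gen_filter])
    have "F \<union> {x} \<subseteq> n_filter_gen n (F \<union> {x})" by (rule gen_sub)
    moreover have "upset (n_filter_gen n (F \<union> {x}))" using gen_filter unfolding n_filter_def by blast
    ultimately show "F \<union> {sup x y} \<subseteq> n_filter_gen n (F \<union> {x})" unfolding upset_def by auto
  qed
  moreover have "?G \<subseteq> n_filter_gen n (F \<union> {y})"
  proof (rule gen_least[OF gen_filter])
    have "F \<union> {y} \<subseteq> n_filter_gen n (F \<union> {y})" by (rule gen_sub)
    moreover have "upset (n_filter_gen n (F \<union> {y}))" using gen_filter unfolding n_filter_def by blast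
    ultimately show "F \<union> {sup x y} \<subseteq> n_filter_gen n (F \<union> {y})" unfolding upset_def by auto
  qed
  ultimately show "?G \<subseteq> n_filter_gen n (F \<union> {x}) \<inter> n_filter_gen n (F \<union> {y})" by blast
qed

end
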